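(* Let $n \ge s \ge 1$ be integers and let $p$ be an odd prime. Let \[ F_p(x) = \sum_{k=0}^{s-1} \binom{n}{k+1} G_{k+1}\, p^k\, x^{s-1-k} \in \mathbf{Z}[x]. \] Then \[ G_n \equiv \sum_{j=0}^{p-1} (-1)^j j^{n-s} F_p(j) \pmod{p^s}. \]
   Context: The Bernoulli numbers $B_k$ are defined by $\frac{t}{e^t-1} = \sum_{k\ge 0} \frac{B_k}{k!} t^k$. The Genocchi numbers are $G_k = 2(1-2^k)B_k$; they are integers. Here $0^0 = 1$. *)

theory Defs
  imports "HOL-Computational_Algebra.Formal_Power_Series"
begin

definition bernoulli :: "nat \<Rightarrow> rat" where
  "bernoulli k = fact k * fps_nth (fps_X / (fps_exp 1 - 1)) k"

definition genocchi :: "nat \<Rightarrow> rat" where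
  "genocchi k = 2 * (1 - 2 ^ k) * bernoulli k"

definition F_poly :: "nat \<Rightarrow> nat \<Rightarrow> nat \<Rightarrow> rat \<Rightarrow> rat" where
  "F_poly n s p x = (\<Sum>k<s. of_nat (n choose (k+1)) * genocchi (k+1) * of_nat p ^ k * x ^ (s-1-k))"

end

theory Submission imports Defs begin
unbundle fps_syntax

abbreviation EE :: "rat fps" where "EE \<equiv> fps_exp 1"
abbreviation BB :: "rat fps" where "BB \<equiv> fps_X / (fps_exp 1 - 1)"

definition dil :: "rat \<Rightarrow> rat fps \<Rightarrow> rat fps" where
  "dil c f = Abs_fps (\<lambda>n. c ^ n * f $ n)"

lemma dil_nth [simp]: "dil c f $ n = c ^ n * f $ n"
  by (simp add: dil_def)

lemma dil_mult: "dil c (f * g) = dil c f * dil c g"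
proof (rule fps_ext)
  fix n
  have "dil c (f * g) $ n = (\<Sum>i=0..n. c^n * (f$i * g$(n-i)))"
    by (simp add: fps_mult_nth sum_distrib_left)
  also have "\<dots> = (\<Sum>i=0..n. (c^i * f$i) * (c^(n-i) * g$(n-i)))"
  proof (rule sum.cong)
    fix i assume "i \<in> {0..n}"
    hence "c^n = c^i * c^(n-i)" by (simp add: power_add[symmetric])
    thus "c^n * (f$i * g$(n-i)) = (c^i * f$i) * (c^(n-i) * g$(n-i))" by simp
  qed simp
  finally show "dil c (f * g) $ n = (dil c f * dil c g) $ n" by (simp add: fps_mult_nth)
qed

lemma dil_add: "dil c (f + g) = dil c f + dil c g"
  by (rule fps_ext) (simp add: algebra_simps)
lemma dil_diff: "dil c (f - g) = dil c f - dil c g"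
  by (rule fps_ext) (simp add: algebra_simps)
lemma dil_one: "dil c 1 = 1"
  by (rule fps_ext) simp
lemma dil_X: "dil c fps_X = fps_const c * fps_X"
proof (rule fps_ext)
  fix n show "dil c fps_X $ n = (fps_const c * fps_X) $ n" by (cases "n = 1") auto
qed
lemma dil_const: "dil c (fps_const a * f) = fps_const a * dil c f"
  by (rule fps_ext) (simp add: algebra_simps)
lemma dil_exp: "dil c (fps_exp a) = fps_exp (c * a)"
  by (rule fps_ext) (simp add: power_mult_distrib)

lemma EE_m1_nz: "EE - 1 \<noteq> 0"
proof
  assume "EE - 1 = 0"
  hence "(EE - 1) $ 1 = 0" by simp
  thus False by simp
qed

lemma EE_p1_nz: "EE + 1 \<noteq> 0"
proof
  assume "EE + 1 = 0"
  hence "(EE + 1) $ 0 = 0" by simp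
  thus False by simp
qed

lemma BB_mult: "BB * (EE - 1) = fps_X"
proof -
  have sd: "subdegree (EE - 1) = 1"
    by (rule subdegreeI) auto
  have "(EE - 1) dvd fps_X"
    using fps_dvd_iff[OF EE_m1_nz] sd by simp
  thus ?thesis by (rule dvd_div_mult_self)
qed

lemma EE2: "dil 2 EE = EE * EE"
  using fps_exp_add_mult[of "1::rat" 1] by (simp add: dil_exp)

lemma BB2_mult: "dil 2 BB * (EE * EE - 1) = fps_const 2 * fps_X"
proof -
  have "dil 2 (BB * (EE - 1)) = fps_const 2 * fps_X" by (simp add: BB_mult dil_X)
  thus ?thesis by (simp add: dil_mult dil_diff dil_one EE2)
qed

lemma BB2_rel: "dil 2 BB * (EE + 1) = fps_const 2 * BB"
proof -
  have "dil 2 BB * (EE + 1) * (EE - 1) = fps_const 2 * BB * (EE - 1)"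
  proof -
    have "dil 2 BB * (EE + 1) * (EE - 1) = dil 2 BB * (EE * EE - 1)" by (simp add: algebra_simps)
    also have "\<dots> = fps_const 2 * fps_X" by (rule BB2_mult)
    also have "\<dots> = fps_const 2 * (BB * (EE - 1))" by (simp add: BB_mult)
    finally show ?thesis by (simp add: mult.assoc)
  qed
  thus ?thesis using EE_m1_nz by simp
qed

definition GG :: "rat fps" where "GG = Abs_fps (\<lambda>n. genocchi n / fact n)"

lemma BB_nth: "BB $ n = bernoulli n / fact n"
  by (simp add: bernoulli_def)

lemma GG_eq: "GG = fps_const 2 * BB - fps_const 2 * dil 2 BB"
  by (rule fps_ext) (simp add: GG_def genocchi_def BB_nth field_simps)

lemma GG_mult: "GG * (EE + 1) = fps_const 2 * fps_X"
proof -
  have "GG * (EE + 1) * (EE - 1) = fps_const 2 * fps_X * (EE - 1)"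
  proof -
    have "GG * (EE + 1) * (EE - 1) = fps_const 2 * (BB * (EE - 1)) * (EE + 1) - fps_const 2 * (dil 2 BB * (EE * EE - 1))"
      by (simp add: GG_eq algebra_simps)
    also have "\<dots> = fps_const 2 * fps_X * (EE + 1) - fps_const 2 * (fps_const 2 * fps_X)"
      by (simp only: BB_mult BB2_mult)
    also have "\<dots> = fps_const 2 * fps_X * (EE - 1)"
    proof -
      have h: "fps_const (2::rat) * fps_const 2 = fps_const 2 + fps_const 2"
        by (rule fps_ext) simp
      have "fps_const 2 * fps_X * (EE + 1) - fps_const 2 * (fps_const 2 * fps_X)
          = fps_const 2 * fps_X * (EE + 1) - (fps_const 2 * fps_const 2) * fps_X"
        by (simp only: mult.assoc)
      also have "\<dots> = fps_const 2 * fps_X * (EE + 1) - (fps_const 2 + fps_const 2) * fps_X"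
        by (simp only: h)
      also have "\<dots> = fps_const 2 * fps_X * (EE - 1)"
        by (simp only: algebra_simps mult_1)
      finally show ?thesis .
    qed
    finally show ?thesis .
  qed
  thus ?thesis using EE_m1_nz by simp
qed

abbreviation SS :: "nat \<Rightarrow> rat fps" where
  "SS m \<equiv> (\<Sum>j<m. fps_const ((-1)^j) * fps_exp (of_nat j))"

lemma exp_step: "fps_exp (of_nat j) * EE = fps_exp (of_nat (Suc j) :: rat)"
  using fps_exp_add_mult[of "of_nat j :: rat" 1] by (simp add: add.commute)

lemma SS_rel: "SS m * (EE + 1) = 1 - fps_const ((-1)^m) * fps_exp (of_nat m)"
proof (induction m)
  case 0 show ?case by simp
next
  case (Suc m)
  have "SS (Suc m) * (EE + 1) = SS m * (EE + 1) + fps_const ((-1)^m) * (fps_exp (of_nat m) * EE) + fps_const ((-1)^m) * fps_exp (of_nat m)"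
    by (simp add: algebra_simps)
  also have "\<dots> = 1 - fps_const ((-1)^m) * fps_exp (of_nat m) + fps_const ((-1)^m) * fps_exp (of_nat (Suc m)) + fps_const ((-1)^m) * fps_exp (of_nat m)"
    by (simp only: Suc.IH exp_step)
  also have "\<dots> = 1 - fps_const ((-1)^Suc m) * fps_exp (of_nat (Suc m))"
  proof -
    have h: "fps_const ((-1::rat)^Suc m) = - fps_const ((-1)^m)" by simp
    show ?thesis by (simp only: h algebra_simps) (rule fps_ext, simp)
  qed
  finally show ?case .
qed

lemma main_fps:
  assumes "odd p"
  shows "dil (of_nat p) GG * SS p = fps_const (of_nat p) * GG"
proof -
  have h0: "fps_const (-1::rat) = - 1" by (rule fps_ext) simp
  have h: "fps_const ((-1::rat)^p) = - 1" using assms h0 by simp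
  have "dil (of_nat p) GG * SS p * (EE + 1) = dil (of_nat p) GG * (1 - (- 1) * fps_exp (of_nat p))"
    by (simp only: SS_rel mult.assoc h)
  also have "\<dots> = dil (of_nat p) GG * (fps_exp (of_nat p) + 1)"
    by simp
  also have "\<dots> = dil (of_nat p) (GG * (EE + 1))"
    by (simp add: dil_mult dil_add dil_one dil_exp)
  also have "\<dots> = fps_const (of_nat p) * GG * (EE + 1)"
    by (simp add: GG_mult dil_const dil_X mult.assoc mult.left_commute[of "fps_const 2"])
  finally show ?thesis using EE_p1_nz by simp
qed

lemma conv_fact:
  fixes a b :: "nat \<Rightarrow> rat"
  shows "fact n * (\<Sum>i=0..n. a i / fact i * (b (n-i) / fact (n-i))) = (\<Sum>i=0..n. of_nat (n choose i) * a i * b (n-i))"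
  unfolding sum_distrib_left
proof (rule sum.cong)
  fix i assume "i \<in> {0..n}"
  hence "(of_nat (n choose i) :: rat) = fact n / (fact i * fact (n - i))" by (simp add: binomial_fact)
  thus "fact n * (a i / fact i * (b (n-i) / fact (n-i))) = of_nat (n choose i) * a i * b (n-i)"
    by (simp add: field_simps)
qed simp

lemma SS_nth: "SS m $ k = (\<Sum>j<m. (-1)^j * of_nat j ^ k) / fact k"
  by (simp add: fps_sum_nth sum_divide_distrib)

lemma main_coeff:
  assumes "odd p"
  shows "of_nat p * genocchi n = (\<Sum>i=0..n. of_nat (n choose i) * (of_nat p ^ i * genocchi i) * (\<Sum>j<p. (-1)^j * of_nat j ^ (n-i)))"
    (is "_ = ?R")
proof -
  have 1: "fact n * (dil (of_nat p) GG * SS p) $ n = fact n * (fps_const (of_nat p) * GG) $ n"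
    using main_fps[OF assms] by simp
  have 2: "fact n * (fps_const (of_nat p) * GG) $ n = of_nat p * genocchi n"
    by (simp add: GG_def)
  have 3: "(dil (of_nat p) GG * SS p) $ n = (\<Sum>i=0..n. (of_nat p ^ i * genocchi i) / fact i * ((\<Sum>j<p. (-1)^j * of_nat j ^ (n-i)) / fact (n-i)))"
    by (simp add: fps_mult_nth SS_nth GG_def)
  have "of_nat p * genocchi n = fact n * (dil (of_nat p) GG * SS p) $ n" by (simp only: 1 2)
  also have "\<dots> = fact n * (\<Sum>i=0..n. (of_nat p ^ i * genocchi i) / fact i * ((\<Sum>j<p. (-1)^j * of_nat j ^ (n-i)) / fact (n-i)))"
    by (simp only: 3)
  also have "\<dots> = ?R"
    by (rule conv_fact[of n "\<lambda>i. of_nat p ^ i * genocchi i" "\<lambda>k. (\<Sum>j<p. (-1)^j * of_nat j ^ k)"])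
  finally show ?thesis .
qed

definition bb :: "nat \<Rightarrow> rat" where "bb m = 1 + (if m = 0 then 1 else 0)"

lemma EE1_nth: "(EE + 1) $ m = bb m / fact m"
  by (simp add: bb_def)

lemma GG_coeff: "(\<Sum>i=0..n. of_nat (n choose i) * genocchi i * bb (n-i)) = (if n = 1 then 2 else 0)"
proof -
  have 1: "fact n * (GG * (EE + 1)) $ n = fact n * (fps_const 2 * fps_X) $ n"
    using GG_mult by simp
  have 3: "(GG * (EE + 1)) $ n = (\<Sum>i=0..n. genocchi i / fact i * (bb (n-i) / fact (n-i)))"
    unfolding fps_mult_nth EE1_nth by (simp add: GG_def)
  have 2: "fact n * (fps_const 2 * fps_X) $ n = (if n = 1 then 2 else 0)" by simp
  show ?thesis using conv_fact[of n genocchi bb] 1 2 3 by simp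
qed

lemma BB_coeff: "(\<Sum>i=0..n. of_nat (n choose i) * (2^i * bernoulli i) * bb (n-i)) = 2 * bernoulli n"
proof -
  have 1: "fact n * (dil 2 BB * (EE + 1)) $ n = fact n * (fps_const 2 * BB) $ n"
    using BB2_rel by simp
  have 3: "(dil 2 BB * (EE + 1)) $ n = (\<Sum>i=0..n. (2^i * bernoulli i) / fact i * (bb (n-i) / fact (n-i)))"
    unfolding fps_mult_nth EE1_nth by (simp add: BB_nth)
  have 2: "fact n * (fps_const 2 * BB) $ n = 2 * bernoulli n" by (simp add: BB_nth)
  show ?thesis using conv_fact[of n "\<lambda>i. 2^i * bernoulli i" bb] 1 2 3 by simp
qed

lemma bernoulli_0: "bernoulli 0 = 1"
proof -
  have "(BB * (EE - 1)) $ 1 = fps_X $ 1" using BB_mult by simp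
  thus ?thesis by (simp add: bernoulli_def)
qed

lemma genocchi_0: "genocchi 0 = 0" by (simp add: genocchi_def)

lemma sum_split_last:
  fixes f :: "nat \<Rightarrow> rat"
  shows "(\<Sum>i=0..n. f i * bb (n-i)) = (\<Sum>i<n. f i) + 2 * f n"
proof -
  have "{0..n} = insert n {..<n}" by auto
  hence "(\<Sum>i=0..n. f i * bb (n-i)) = f n * bb 0 + (\<Sum>i<n. f i * bb (n-i))" by simp
  also have "(\<Sum>i<n. f i * bb (n-i)) = (\<Sum>i<n. f i)"
    by (rule sum.cong) (auto simp: bb_def)
  finally show ?thesis by (simp add: bb_def)
qed

lemma G_rec: "2 * genocchi n + (\<Sum>i<n. of_nat (n choose i) * genocchi i) = (if n = 1 then 2 else 0)"
  using GG_coeff[of n] sum_split_last[of "\<lambda>i. of_nat (n choose i) * genocchi i" n] by simp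

lemma G_B: "genocchi n = (\<Sum>i<n. of_nat (n choose i) * (2^i * bernoulli i))"
proof -
  have "(\<Sum>i<n. of_nat (n choose i) * (2^i * bernoulli i)) + 2 * (2^n * bernoulli n) = 2 * bernoulli n"
    using BB_coeff[of n] sum_split_last[of "\<lambda>i. of_nat (n choose i) * (2^i * bernoulli i)" n] by simp
  thus ?thesis by (simp add: genocchi_def algebra_simps)
qed

lemma G_pow2: "(2::rat) ^ n * genocchi n \<in> \<int>"
proof (induction n rule: less_induct)
  case (less n)
  show ?case
  proof (cases n)
    case 0 thus ?thesis by (simp add: genocchi_0)
  next
    case (Suc m)
    have e: "2 * genocchi n = (if n = 1 then 2 else 0) - (\<Sum>i<n. of_nat (n choose i) * genocchi i)"
      using G_rec[of n] by simp
    have "(2::rat)^n * genocchi n = 2^m * (2 * genocchi n)" using Suc by simp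
    also have "\<dots> = 2^m * (if n = 1 then 2 else 0) - (\<Sum>i<n. of_nat (n choose i) * 2^(m-i) * (2^i * genocchi i))"
    proof -
      have "(\<Sum>i<n. of_nat (n choose i) * 2^(m-i) * (2^i * genocchi i)) = (\<Sum>i<n. 2^m * (of_nat (n choose i) * genocchi i))"
      proof (rule sum.cong)
        fix i assume "i \<in> {..<n}"
        hence "(2::rat)^(m-i) * 2^i = 2^m" using Suc by (simp add: power_add[symmetric])
        thus "of_nat (n choose i) * 2^(m-i) * (2^i * genocchi i) = 2^m * (of_nat (n choose i) * genocchi i)"
          by (metis (no_types, lifting) mult.assoc mult.commute)
      qed simp
      thus ?thesis by (simp add: e sum_distrib_left right_diff_distrib)
    qed
    also have "\<dots> \<in> \<int>"
    proof (rule Ints_diff)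
      show "(2::rat)^m * (if n = 1 then 2 else 0) \<in> \<int>" by (intro Ints_mult) auto
      show "(\<Sum>i<n. of_nat (n choose i) * 2^(m-i) * (2^i * genocchi i)) \<in> \<int>"
      proof (rule Ints_sum)
        fix i assume "i \<in> {..<n}"
        hence "(2::rat)^i * genocchi i \<in> \<int>" using less by auto
        thus "of_nat (n choose i) * 2^(m-i) * (2^i * genocchi i) \<in> \<int>"
          by (rule Ints_mult[rotated]) (intro Ints_mult Ints_of_nat Ints_power Ints_numeral)
      qed
    qed
    finally show ?thesis .
  qed
qed

lemma B_odd: "\<exists>c::int. odd c \<and> (\<forall>i\<le>n. of_int c * (2 * bernoulli i) \<in> \<int>)"
proof (induction n)
  case 0
  show ?case by (rule exI[of _ 1]) (simp add: bernoulli_0)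
next
  case (Suc m)
  then obtain c :: int where c: "odd c" "\<forall>i\<le>m. of_int c * (2 * bernoulli i) \<in> \<int>" by blast
  have "of_int c * genocchi (Suc m) = (\<Sum>i<Suc m. of_nat (Suc m choose i) * (of_int c * (2^i * bernoulli i)))"
    by (simp add: G_B sum_distrib_left algebra_simps)
  also have "\<dots> \<in> \<int>"
  proof (rule Ints_sum)
    fix i assume i: "i \<in> {..<Suc m}"
    have "of_int c * (2^i * bernoulli i) \<in> \<int>"
    proof (cases i)
      case 0 thus ?thesis by (simp add: bernoulli_0)
    next
      case (Suc k)
      have "of_int c * (2^i * bernoulli i) = 2^k * (of_int c * (2 * bernoulli i))"
        using Suc by simp
      also have "\<dots> \<in> \<int>" using c(2) i Suc by (intro Ints_mult[OF Ints_power]) auto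
      finally show ?thesis .
    qed
    thus "of_nat (Suc m choose i) * (of_int c * (2^i * bernoulli i)) \<in> \<int>"
      by (rule Ints_mult[OF Ints_of_nat])
  qed
  finally have cG: "of_int c * genocchi (Suc m) \<in> \<int>" .
  define c' where "c' = c * (2^Suc m - 1)"
  have "odd c'" using c(1) by (simp add: c'_def)
  moreover have "\<forall>i\<le>Suc m. of_int c' * (2 * bernoulli i) \<in> \<int>"
  proof (intro allI impI)
    fix i assume "i \<le> Suc m"
    show "of_int c' * (2 * bernoulli i) \<in> \<int>"
    proof (cases "i = Suc m")
      case True
      have "of_int c' * (2 * bernoulli i) = - (of_int c * genocchi (Suc m))"
        using True by (simp add: c'_def genocchi_def algebra_simps)
      thus ?thesis using cG by simp
    next
      case False
      hence "i \<le> m" using \<open>i \<le> Suc m\<close> by simp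
      have "of_int c' * (2 * bernoulli i) = (2^Suc m - 1) * (of_int c * (2 * bernoulli i))"
        by (simp add: c'_def algebra_simps)
      also have "\<dots> \<in> \<int>"
      proof (rule Ints_mult)
        show "(2::rat)^Suc m - 1 \<in> \<int>" by (intro Ints_diff Ints_power) auto
        show "of_int c * (2 * bernoulli i) \<in> \<int>" using c(2) \<open>i \<le> m\<close> by auto
      qed
      finally show ?thesis .
    qed
  qed
  ultimately show ?case by blast
qed

lemma genocchi_int: "genocchi n \<in> \<int>"
proof -
  obtain c :: int where c: "odd c" "of_int c * (2 * bernoulli n) \<in> \<int>" using B_odd[of n] by blast
  have cG: "of_int c * genocchi n \<in> \<int>"
  proof -
    have "of_int c * genocchi n = (1 - 2^n) * (of_int c * (2 * bernoulli n))"
      by (simp add: genocchi_def algebra_simps)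
    also have "\<dots> \<in> \<int>" using c(2) by (intro Ints_mult[OF Ints_diff]) auto
    finally show ?thesis .
  qed
  have "coprime ((2::int)^n) c" using c(1) by simp
  hence "gcd ((2::int)^n) c = 1" by (simp add: coprime_iff_gcd_eq_1)
  then obtain u v :: int where uv: "u * 2^n + v * c = 1" using bezout_int[of "2^n" c] by auto
  have "genocchi n = of_int u * (2^n * genocchi n) + of_int v * (of_int c * genocchi n)"
  proof -
    have "(of_int (u * 2^n + v * c) :: rat) = 1" using uv by simp
    hence "of_int u * 2^n + of_int v * of_int c = (1::rat)" by simp
    hence "genocchi n = (of_int u * 2^n + of_int v * of_int c) * genocchi n" by simp
    thus ?thesis by (simp add: algebra_simps)
  qed
  also have "\<dots> \<in> \<int>" by (rule Ints_add[OF Ints_mult[OF Ints_of_int G_pow2] Ints_mult[OF Ints_of_int cG]])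
  finally show ?thesis .
qed

lemma int_seq: "\<exists>g::nat\<Rightarrow>int. \<forall>i. genocchi i = of_int (g i)"
proof -
  have "\<forall>i. \<exists>z::int. genocchi i = of_int z" using genocchi_int by (metis Ints_cases)
  thus ?thesis by metis
qed

theorem proposition2:
  fixes n s p :: nat
  assumes "1 \<le> s" and "s \<le> n" and "prime p" and "odd p"
  shows "\<exists>m::int. genocchi n - (\<Sum>j<p. (-1) ^ j * of_nat j ^ (n - s) * F_poly n s p (of_nat j))
           = of_int (int p ^ s * m)"
proof -
  define A where "A k = (\<Sum>j<p. (-1)^j * (of_nat j :: rat) ^ k)" for k
  define T where "T k = of_nat (n choose (k+1)) * (of_nat p ^ k * genocchi (k+1)) * A (n - 1 - k)" for k
  have p0: "(of_nat p :: rat) \<noteq> 0" using assms(3) by (simp add: prime_gt_0_nat)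
  obtain n' where n': "n = Suc n'" using assms by (cases n) auto
  have "of_nat p * genocchi n = (\<Sum>i=0..n. of_nat (n choose i) * (of_nat p ^ i * genocchi i) * A (n-i))"
    using main_coeff[OF assms(4), of n] by (simp add: A_def)
  also have "\<dots> = (\<Sum>k=0..n'. of_nat (n choose Suc k) * (of_nat p ^ Suc k * genocchi (Suc k)) * A (n - Suc k))"
    unfolding n' by (subst sum.atLeast0_atMost_Suc_shift) (simp add: genocchi_0)
  also have "\<dots> = of_nat p * (\<Sum>k<n. T k)"
    unfolding sum_distrib_left T_def n'
    by (rule sum.cong) (auto simp: algebra_simps atLeast0AtMost lessThan_Suc_atMost)
  finally have Gn: "genocchi n = (\<Sum>k<n. T k)" using p0 by simp
  have split: "(\<Sum>k<n. T k) = (\<Sum>k<s. T k) + (\<Sum>k\<in>{s..<n}. T k)"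
  proof -
    have "{..<n} = {..<s} \<union> {s..<n}" using assms(2) by auto
    moreover have "sum T ({..<s} \<union> {s..<n}) = sum T {..<s} + sum T {s..<n}"
      by (rule sum.union_disjoint) auto
    ultimately show ?thesis by simp
  qed
  have Fsum: "(\<Sum>j<p. (-1) ^ j * of_nat j ^ (n - s) * F_poly n s p (of_nat j)) = (\<Sum>k<s. T k)"
  proof -
    have "(\<Sum>j<p. (-1) ^ j * of_nat j ^ (n - s) * F_poly n s p (of_nat j))
        = (\<Sum>j<p. \<Sum>k<s. of_nat (n choose (k+1)) * (of_nat p ^ k * genocchi (k+1)) * ((-1)^j * (of_nat j ^ (n - s) * of_nat j ^ (s-1-k))))"
      unfolding F_poly_def sum_distrib_left by (intro sum.cong refl) (simp add: algebra_simps)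
    also have "\<dots> = (\<Sum>j<p. \<Sum>k<s. of_nat (n choose (k+1)) * (of_nat p ^ k * genocchi (k+1)) * ((-1)^j * of_nat j ^ (n - 1 - k)))"
    proof (intro sum.cong refl)
      fix j k assume "k \<in> {..<s}"
      hence "n - s + (s - 1 - k) = n - 1 - k" using assms(2) by auto
      hence "(of_nat j :: rat) ^ (n - s) * of_nat j ^ (s-1-k) = of_nat j ^ (n - 1 - k)"
        by (metis power_add)
      thus "of_nat (n choose (k+1)) * (of_nat p ^ k * genocchi (k+1)) * ((-1)^j * (of_nat j ^ (n - s) * of_nat j ^ (s-1-k)))
          = of_nat (n choose (k+1)) * (of_nat p ^ k * genocchi (k+1)) * ((-1)^j * (of_nat j :: rat) ^ (n - 1 - k))"
        by simp
    qed
    also have "\<dots> = (\<Sum>k<s. T k)"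
      unfolding T_def A_def sum_distrib_left by (subst sum.swap) simp
    finally show ?thesis .
  qed
  obtain g :: "nat \<Rightarrow> int" where g: "\<And>i. genocchi i = of_int (g i)" using int_seq by blast
  define m where "m = (\<Sum>k\<in>{s..<n}. int (n choose (k+1)) * int p ^ (k - s) * g (k+1) * (\<Sum>j<p. (-1)^j * int j ^ (n - 1 - k)))"
  have "(\<Sum>k\<in>{s..<n}. T k) = of_int (int p ^ s * m)"
    unfolding m_def sum_distrib_left[of "int p ^ s"] of_int_sum
  proof (rule sum.cong[OF refl])
    fix k assume "k \<in> {s..<n}"
    hence "(of_nat p :: rat) ^ k = of_nat p ^ s * of_nat p ^ (k - s)" by (simp add: power_add[symmetric])
    thus "T k = of_int (int p ^ s * (int (n choose (k+1)) * int p ^ (k - s) * g (k+1) * (\<Sum>j<p. (-1)^j * int j ^ (n - 1 - k))))"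
      by (simp add: T_def A_def g)
  qed
  thus ?thesis using Gn split Fsum by (intro exI[of _ m]) simp
qed

end
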